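(* Let $H$ be a $3$-graph, $K_H=3v(H)^3$, let $\varepsilon\le 1/5$ and $C\ge 1$ be constants. Then there is $n_0$ such that the following holds for all $n\ge n_0$. Let $G$ be a $3$-partite $3$-graph with vertex classes $X,Y,Z$ each of size $n$, and let $\mathcal{L}$ be a bipartite graph between $X$ and $Y$ with exactly $(C/2)n^{2-\varepsilon}$ edges, such that the number of $H$-forbidden $4$-cycles (with respect to $G$) contained in $\mathcal{L}$ is at most $K_H\, n^{3+1/5-\varepsilon}$. Then there is a subset $Y'\subseteq Y$ with $|Y'|\ge n^{1-\varepsilon}/4$ such that (1) at most $(400/C)\binom{|Y'|}{2}$ pairs of vertices of $Y'$ are bad, and (2) at most $(600/C)\binom{|Y'|}{3}$ triples of vertices of $Y'$ are bad.
   Context: A $3$-graph is a $3$-uniform hypergraph; $v(\cdot)$ denotes the number of vertices. $G$ is $3$-partite with classes $X,Y,Z$: every edge contains exactly one vertex of each class. For $z\in Z$, the link graph $\mathcal{L}_z$ is the bipartite graph between $X$ and $Y$ with edges the pairs $xy$ such that $\{x,y,z\}$ is an edge of $G$. A $4$-cycle between $X$ and $Y$ is a $4$-cycle in the complete bipartite graph on $X\cup Y$; it is the boundary of a $4$-disk with centre $z\in Z$ exactly when it is contained in $\mathcal{L}_z$. With $K_H=3v(H)^3$, such a $4$-cycle is $H$-forbidden if the number of $z\in Z$ with the cycle contained in $\mathcal{L}_z$ is at most $K_H$, and $H$-admissible otherwise. For a set $S$ of vertices, $\Gamma(S)$ denotes the set of common neighbours of $S$ in the bipartite graph $\mathcal{L}$;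 $\Gamma(y_1,y_2)=\Gamma(\{y_1,y_2\})$ etc. A pair $y_1y_2$ of distinct vertices of $Y$ is good if $|\Gamma(y_1,y_2)|\ge n^{1-2\varepsilon}$ and the number of $H$-forbidden $4$-cycles in $\mathcal{L}$ containing both $y_1$ and $y_2$ is at most $(K_H/C)\,n^{1-3\varepsilon}\,|\Gamma(y_1,y_2)|$; otherwise it is bad. A triple $y_1y_2y_3$ of distinct vertices of $Y$ is good if $|\Gamma(y_1,y_2,y_3)|\ge n^{1-3\varepsilon}$, and bad otherwise. *)

theory Defs
  imports "HOL-Analysis.Analysis"
begin

definition three_graph :: "'b set \<Rightarrow> 'b set set \<Rightarrow> bool" where
  "three_graph V E \<longleftrightarrow> finite V \<and> (\<forall>e\<in>E. e \<subseteq> V \<and> card e = 3)"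

definition K_H :: "'b set \<Rightarrow> nat" where
  "K_H VH = 3 * card VH ^ 3"

definition tripartite_3graph :: "'a set \<Rightarrow> 'a set \<Rightarrow> 'a set \<Rightarrow> 'a set set \<Rightarrow> bool" where
  "tripartite_3graph X Y Z G \<longleftrightarrow>
     finite X \<and> finite Y \<and> finite Z \<and>
     X \<inter> Y = {} \<and> X \<inter> Z = {} \<and> Y \<inter> Z = {} \<and>
     three_graph (X \<union> Y \<union> Z) G \<and>
     (\<forall>e\<in>G. card (e \<inter> X) = 1 \<and> card (e \<inter> Y) = 1 \<and> card (e \<inter> Z) = 1)"

definition link :: "'a set \<Rightarrow> 'a set \<Rightarrow> 'a set set \<Rightarrow> 'a \<Rightarrow> ('a \<times> 'a) set" where
  "link X Y G z = {(x, y). x \<in> X \<and> y \<in> Y \<and> {x, y, z} \<in> G}"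

text \<open>A 4-cycle between X and Y in the complete bipartite graph is determined by
  its two X-vertices A and its two Y-vertices B (edges A \<times> B).\<close>
definition four_cycles :: "'a set \<Rightarrow> 'a set \<Rightarrow> ('a set \<times> 'a set) set" where
  "four_cycles X Y = {(A, B). A \<subseteq> X \<and> card A = 2 \<and> B \<subseteq> Y \<and> card B = 2}"

definition cycle_in :: "'a set \<times> 'a set \<Rightarrow> ('a \<times> 'a) set \<Rightarrow> bool" where
  "cycle_in c L \<longleftrightarrow> fst c \<times> snd c \<subseteq> L"

definition H_forbidden :: "nat \<Rightarrow> 'a set \<Rightarrow> 'a set \<Rightarrow> 'a set \<Rightarrow> 'a set set \<Rightarrow> 'a set \<times> 'a set \<Rightarrow> bool" where
  "H_forbidden K X Y Z G c \<longleftrightarrow> card {z \<in> Z. cycle_in c (link X Y G z)} \<le> K"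

definition forbidden_cycles_in ::
  "nat \<Rightarrow> 'a set \<Rightarrow> 'a set \<Rightarrow> 'a set \<Rightarrow> 'a set set \<Rightarrow> ('a \<times> 'a) set \<Rightarrow> ('a set \<times> 'a set) set" where
  "forbidden_cycles_in K X Y Z G L =
     {c \<in> four_cycles X Y. cycle_in c L \<and> H_forbidden K X Y Z G c}"

definition Gamma :: "'a set \<Rightarrow> ('a \<times> 'a) set \<Rightarrow> 'a set \<Rightarrow> 'a set" where
  "Gamma X L S = {x \<in> X. \<forall>y\<in>S. (x, y) \<in> L}"

definition good_pair ::
  "nat \<Rightarrow> real \<Rightarrow> real \<Rightarrow> nat \<Rightarrow> 'a set \<Rightarrow> 'a set \<Rightarrow> 'a set \<Rightarrow> 'a set set \<Rightarrow> ('a \<times> 'a) set \<Rightarrow> 'a set \<Rightarrow> bool" where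
  "good_pair n \<epsilon> C K X Y Z G L P \<longleftrightarrow>
     real (card (Gamma X L P)) \<ge> real n powr (1 - 2 * \<epsilon>) \<and>
     real (card {c \<in> forbidden_cycles_in K X Y Z G L. P \<subseteq> snd c})
       \<le> (real K / C) * real n powr (1 - 3 * \<epsilon>) * real (card (Gamma X L P))"

definition good_triple :: "nat \<Rightarrow> real \<Rightarrow> 'a set \<Rightarrow> ('a \<times> 'a) set \<Rightarrow> 'a set \<Rightarrow> bool" where
  "good_triple n \<epsilon> X L T \<longleftrightarrow> real (card (Gamma X L T)) \<ge> real n powr (1 - 3 * \<epsilon>)"

end

theory Submission
  imports Defs
begin

lemma count_swap:
  assumes "finite A" "finite B"
  shows "(\<Sum>a\<in>A. card {b\<in>B. R a b}) = (\<Sum>b\<in>B. card {a\<in>A. R a b})"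
proof -
  have 1: "\<And>a. card {b\<in>B. R a b} = (\<Sum>b\<in>B. if R a b then 1 else 0)"
    using assms by (simp add: sum.inter_filter[symmetric])
  have 2: "\<And>b. card {a\<in>A. R a b} = (\<Sum>a\<in>A. if R a b then 1 else 0)"
    using assms by (simp add: sum.inter_filter[symmetric])
  show ?thesis unfolding 1 2 by (rule sum.swap)
qed

lemma constC: fixes C :: real assumes "C \<ge> 1"
  shows "C^3/8 - C^3/50 - C/20 - 1/64 > 0"
proof -
  have "C^1 \<le> C^3" using assms by (intro power_increasing) auto
  moreover have "1 \<le> C^3" using assms by simp
  ultimately show ?thesis by simp
qed
lemma tangent3:
  fixes d mu :: real assumes "d \<ge> 0" "mu \<ge> 0"
  shows "d^2 * min d (2*mu) \<ge> 3*mu^2*d - 2*mu^3"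
proof (cases "d \<le> 2*mu")
  case True
  have "d^2 * d - (3*mu^2*d - 2*mu^3) = (d-mu)^2*(d+2*mu)" by (simp add: algebra_simps power2_eq_square power3_eq_cube)
  moreover have "(d-mu)^2*(d+2*mu) \<ge> 0" using assms by simp
  ultimately show ?thesis using True by (simp add: min_def power2_eq_square power3_eq_cube)
next
  case False
  have "d^2 * (2*mu) - (3*mu^2*d - 2*mu^3) = mu*(2*(d - 3/4*mu)^2 + 7/8*mu^2)" by (simp add: algebra_simps power2_eq_square power3_eq_cube)
  moreover have "mu*(2*(d - 3/4*mu)^2 + 7/8*mu^2) \<ge> 0" using assms by simp
  ultimately show ?thesis using False by (simp add: min_def)
qed

lemma main:
  fixes X Y Z :: "nat set" and G and L :: "(nat \<times> nat) set" and K n :: nat and \<epsilon> C :: real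
  assumes tri: "tripartite_3graph X Y Z G" and cX: "card X = n" and cY: "card Y = n"
    and LXY: "L \<subseteq> X \<times> Y" and cL: "real (card L) = (C / 2) * real n powr (2 - \<epsilon>)"
    and cF: "real (card (forbidden_cycles_in K X Y Z G L)) \<le> real K * real n powr (3 + 1/5 - \<epsilon>)"
    and eps: "\<epsilon> \<le> 1/5" and C1: "C \<ge> 1" and nbig: "real n powr (4/5) \<ge> 24"
  shows "\<exists>Y' \<subseteq> Y. real (card Y') \<ge> real n powr (1 - \<epsilon>) / 4 \<and>
                 real (card {P. P \<subseteq> Y' \<and> card P = 2 \<and>
                                \<not> good_pair n \<epsilon> C K X Y Z G L P})
                   \<le> (400 / C) * real (card Y' choose 2) \<and>
                 real (card {T. T \<subseteq> Y' \<and> card T = 3 \<and> \<not> good_triple n \<epsilon> X L T})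
                   \<le> (600 / C) * real (card Y' choose 3)"
proof -
  have finX: "finite X" and finY: "finite Y" using tri unfolding tripartite_3graph_def by auto
  have n1: "real n \<ge> 1"
  proof (rule ccontr)
    assume "\<not> real n \<ge> 1" then have "n = 0" by simp
    then show False using nbig by simp
  qed
  define Dr where "Dr = real n powr (1 - \<epsilon>)"
  have Dpos: "Dr > 0" using n1 unfolding Dr_def by simp
  have D24: "Dr \<ge> 24"
  proof -
    have "real n powr (4/5) \<le> Dr" unfolding Dr_def by (rule powr_mono) (use eps n1 in auto)
    then show ?thesis using nbig by simp
  qed
  have P2: "real n powr (2 - \<epsilon>) = real n * Dr"
    unfolding Dr_def using powr_add[of "real n" 1 "1-\<epsilon>"] n1 by simp
  have Dsq: "Dr^2 = real n powr (2 - 2*\<epsilon>)"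
    unfolding Dr_def power2_eq_square powr_add[symmetric] by simp
  have Dcube: "Dr^3 = real n powr (3 - 3*\<epsilon>)"
    unfolding Dr_def power3_eq_cube powr_add[symmetric] by simp
  have P3: "real n ^ 2 * real n powr (1 - 2*\<epsilon>) = real n * Dr^2"
  proof -
    have "real n ^ 2 = real n powr 2" using n1 by (simp add: powr_realpow)
    then have "real n ^ 2 * real n powr (1 - 2*\<epsilon>) = real n powr (2 + (1 - 2*\<epsilon>))"
      by (simp only: powr_add)
    also have "\<dots> = real n powr (1 + (2 - 2*\<epsilon>))" by (simp add: algebra_simps)
    also have "\<dots> = real n * Dr^2" unfolding Dsq powr_add using n1 by simp
    finally show ?thesis .
  qed
  have P5: "real n ^ 3 * real n powr (1 - 3*\<epsilon>) = real n * Dr^3"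
  proof -
    have "real n ^ 3 = real n powr 3" using n1 by (simp add: powr_realpow)
    then have "real n ^ 3 * real n powr (1 - 3*\<epsilon>) = real n powr (3 + (1 - 3*\<epsilon>))"
      by (simp only: powr_add)
    also have "\<dots> = real n powr (1 + (3 - 3*\<epsilon>))" by (simp add: algebra_simps)
    also have "\<dots> = real n * Dr^3" unfolding Dcube powr_add using n1 by simp
    finally show ?thesis .
  qed
  have P4: "real n powr (3*\<epsilon> - 1) * real n powr (3 + 1/5 - \<epsilon>) \<le> real n * Dr^2"
  proof -
    have "real n powr (3*\<epsilon> - 1) * real n powr (3 + 1/5 - \<epsilon>) = real n powr (11/5 + 2*\<epsilon>)"
      unfolding powr_add[symmetric] by (simp add: algebra_simps)
    also have "\<dots> \<le> real n powr (3 - 2*\<epsilon>)" by (rule powr_mono) (use eps n1 in auto)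
    also have "\<dots> = real n * Dr^2" unfolding Dsq using powr_add[of "real n" 1 "2-2*\<epsilon>"] n1 by simp
    finally show ?thesis .
  qed

  define N where "N x = {y\<in>Y. (x,y)\<in>L}" for x
  define FC where "FC = forbidden_cycles_in K X Y Z G L"
  define F where "F P = card {c\<in>FC. P \<subseteq> snd c}" for P
  define B2 where "B2 = {P. P \<subseteq> Y \<and> card P = 2 \<and> \<not> good_pair n \<epsilon> C K X Y Z G L P}"
  define B3 where "B3 = {T. T \<subseteq> Y \<and> card T = 3 \<and> \<not> good_triple n \<epsilon> X L T}"
  define b2 where "b2 x = card {P\<in>B2. P \<subseteq> N x}" for x
  define b3 where "b3 x = card {P\<in>B3. P \<subseteq> N x}" for x
  have NY: "N x \<subseteq> Y" for x unfolding N_def by auto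
  have Gam: "Gamma X L P = {x\<in>X. P \<subseteq> N x}" if "P \<subseteq> Y" for P
    using that unfolding Gamma_def N_def by auto
  have finB2: "finite B2" unfolding B2_def by (rule finite_subset[of _ "Pow Y"]) (use finY in auto)
  have finB3: "finite B3" unfolding B3_def by (rule finite_subset[of _ "Pow Y"]) (use finY in auto)
  have sum_b2: "(\<Sum>x\<in>X. b2 x) = (\<Sum>P\<in>B2. card (Gamma X L P))"
  proof -
    have "(\<Sum>x\<in>X. b2 x) = (\<Sum>P\<in>B2. card {x\<in>X. P \<subseteq> N x})"
      unfolding b2_def by (rule count_swap[OF finX finB2])
    also have "\<dots> = (\<Sum>P\<in>B2. card (Gamma X L P))"
      by (rule sum.cong) (auto simp: Gam B2_def)
    finally show ?thesis .
  qed
  have sum_b3: "(\<Sum>x\<in>X. b3 x) = (\<Sum>P\<in>B3. card (Gamma X L P))"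
  proof -
    have "(\<Sum>x\<in>X. b3 x) = (\<Sum>P\<in>B3. card {x\<in>X. P \<subseteq> N x})"
      unfolding b3_def by (rule count_swap[OF finX finB3])
    also have "\<dots> = (\<Sum>P\<in>B3. card (Gamma X L P))"
      by (rule sum.cong) (auto simp: Gam B3_def)
    finally show ?thesis .
  qed
  have sum_d: "(\<Sum>x\<in>X. card (N x)) = card L"
  proof -
    have "L = Sigma X N" using LXY unfolding N_def by auto
    moreover have "\<forall>x\<in>X. finite (N x)" using finY NY finite_subset by blast
    ultimately show ?thesis using finX by simp
  qed
  have cB2: "real (card B2) \<le> real n ^ 2"
  proof -
    have "card B2 \<le> card {P. P \<subseteq> Y \<and> card P = 2}"
      by (rule card_mono) (use finY in \<open>auto simp: B2_def\<close>)
    also have "\<dots> = n choose 2" using n_subsets[OF finY] cY by simp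
    also have "\<dots> \<le> n ^ 2" by (cases "2 \<le> n") (auto simp: binomial_le_pow binomial_eq_0)
    finally have "card B2 \<le> n ^ 2" .
    then show ?thesis by (simp only: of_nat_power[symmetric] of_nat_le_iff)
  qed
  have cB3: "real (card B3) \<le> real n ^ 3"
  proof -
    have "card B3 \<le> card {P. P \<subseteq> Y \<and> card P = 3}"
      by (rule card_mono) (use finY in \<open>auto simp: B3_def\<close>)
    also have "\<dots> = n choose 3" using n_subsets[OF finY] cY by simp
    also have "\<dots> \<le> n ^ 3" by (cases "3 \<le> n") (auto simp: binomial_le_pow binomial_eq_0)
    finally have "card B3 \<le> n ^ 3" .
    then show ?thesis by (simp only: of_nat_power[symmetric] of_nat_le_iff)
  qed
  have finFC: "finite FC"
  proof (rule finite_subset[of _ "Pow X \<times> Pow Y"])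
    show "FC \<subseteq> Pow X \<times> Pow Y" unfolding FC_def forbidden_cycles_in_def four_cycles_def by auto
  qed (use finX finY in auto)
  have sndFC: "card (snd c) = 2" if "c \<in> FC" for c
    using that unfolding FC_def forbidden_cycles_in_def four_cycles_def by auto
  have sumF: "(\<Sum>P\<in>B2. F P) \<le> card FC"
  proof -
    have "(\<Sum>P\<in>B2. F P) = (\<Sum>c\<in>FC. card {P\<in>B2. P \<subseteq> snd c})"
      unfolding F_def by (rule count_swap[OF finB2 finFC])
    also have "\<dots> \<le> (\<Sum>c\<in>FC. 1)"
    proof (rule sum_mono)
      fix c assume c: "c \<in> FC"
      have sub: "{P\<in>B2. P \<subseteq> snd c} \<subseteq> {snd c}"
      proof
        fix P assume P: "P \<in> {P\<in>B2. P \<subseteq> snd c}"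
        have "finite (snd c)" using sndFC[OF c] by (metis card.infinite zero_neq_numeral)
        then have "P = snd c" using P sndFC[OF c] by (intro card_subset_eq) (auto simp: B2_def)
        then show "P \<in> {snd c}" by simp
      qed
      show "card {P\<in>B2. P \<subseteq> snd c} \<le> 1"
        using card_mono[OF _ sub] by simp
    qed
    finally show ?thesis by simp
  qed

  have Cpos: "C > 0" using C1 by simp
  have cFC0: "card FC = 0" if "K = 0" using cF that unfolding FC_def by simp
  have FPle: "F P \<le> card FC" for P unfolding F_def by (rule card_mono[OF finFC]) auto
  have perP: "real (card (Gamma X L P)) \<le> real n powr (1-2*\<epsilon>) + (C / real K) * real n powr (3*\<epsilon>-1) * real (F P)"
    if PB: "P \<in> B2" for P
  proof -
    define g where "g = real (card (Gamma X L P))"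
    define a where "a = real n powr (1-3*\<epsilon>)"
    have apos: "a > 0" unfolding a_def using n1 by simp
    have ainv: "real n powr (3*\<epsilon>-1) = 1 / a"
    proof -
      have e: "3*\<epsilon>-1 = -(1-3*\<epsilon>)" by simp
      show ?thesis unfolding e powr_minus a_def by (simp add: inverse_eq_divide)
    qed
    have ngp: "\<not> good_pair n \<epsilon> C K X Y Z G L P" using PB unfolding B2_def by blast
    have ng: "\<not> (g \<ge> real n powr (1-2*\<epsilon>) \<and> real (F P) \<le> (real K / C) * a * g)"
      using ngp unfolding good_pair_def FC_def[symmetric] F_def[symmetric] g_def[symmetric] a_def[symmetric] .
    have t2: "(C / real K) * real n powr (3*\<epsilon>-1) * real (F P) \<ge> 0" using Cpos by simp
    show ?thesis
    proof (cases "g < real n powr (1-2*\<epsilon>)")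
      case True then show ?thesis using t2 unfolding g_def by linarith
    next
      case False
      then have Fbig: "real (F P) > (real K / C) * a * g" using ng by linarith
      show ?thesis
      proof (cases "K = 0")
        case True
        then have "F P = 0" using FPle[of P] cFC0 by simp
        then show ?thesis using Fbig True by simp
      next
        case False
        then have Kpos: "real K > 0" by simp
        have cpos: "C / (real K * a) > 0" using Kpos apos Cpos by simp
        have "C / (real K * a) * ((real K / C) * a * g) < C / (real K * a) * real (F P)"
          by (rule mult_strict_left_mono[OF Fbig cpos])
        moreover have "C / (real K * a) * ((real K / C) * a * g) = g" using Kpos apos Cpos by simp
        moreover have "C / (real K * a) * real (F P) = (C / real K) * (1/a) * real (F P)" by simp
        ultimately have "g < (C / real K) * (1/a) * real (F P)" by simp
        then show ?thesis unfolding ainv g_def by (smt (verit) powr_ge_zero)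
      qed
    qed
  qed
  have S2: "(\<Sum>P\<in>B2. real (card (Gamma X L P))) \<le> (1 + C) * real n * Dr^2"
  proof -
    have "(\<Sum>P\<in>B2. real (card (Gamma X L P))) \<le> (\<Sum>P\<in>B2. real n powr (1-2*\<epsilon>) + (C / real K) * real n powr (3*\<epsilon>-1) * real (F P))"
      by (rule sum_mono) (rule perP)
    also have "\<dots> = real (card B2) * real n powr (1-2*\<epsilon>) + (C / real K) * real n powr (3*\<epsilon>-1) * real (\<Sum>P\<in>B2. F P)"
      by (simp add: sum.distrib sum_distrib_left)
    also have "\<dots> \<le> real n ^ 2 * real n powr (1-2*\<epsilon>) + C * real n * Dr^2"
    proof (rule add_mono)
      show "real (card B2) * real n powr (1-2*\<epsilon>) \<le> real n ^ 2 * real n powr (1-2*\<epsilon>)"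
        using cB2 by (simp add: mult_right_mono)
      show "(C / real K) * real n powr (3*\<epsilon>-1) * real (\<Sum>P\<in>B2. F P) \<le> C * real n * Dr^2"
      proof (cases "K = 0")
        case True then show ?thesis using Cpos Dpos by simp
      next
        case False
        have "real (\<Sum>P\<in>B2. F P) \<le> real K * real n powr (3 + 1/5 - \<epsilon>)"
          using sumF cF unfolding FC_def by (meson of_nat_le_iff order_trans)
        then have "(C / real K) * real n powr (3*\<epsilon>-1) * real (\<Sum>P\<in>B2. F P)
            \<le> (C / real K) * real n powr (3*\<epsilon>-1) * (real K * real n powr (3 + 1/5 - \<epsilon>))"
          using Cpos by (intro mult_left_mono) auto
        also have "\<dots> = C * (real n powr (3*\<epsilon>-1) * real n powr (3 + 1/5 - \<epsilon>))" using False by simp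
        also have "\<dots> \<le> C * (real n * Dr^2)" using P4 Cpos by (intro mult_left_mono) auto
        finally show ?thesis by simp
      qed
    qed
    also have "\<dots> = (1 + C) * real n * Dr^2" using P3 by (simp add: algebra_simps)
    finally show ?thesis .
  qed
  have S3: "(\<Sum>P\<in>B3. real (card (Gamma X L P))) \<le> real n * Dr^3"
  proof -
    have "(\<Sum>P\<in>B3. real (card (Gamma X L P))) \<le> (\<Sum>P\<in>B3. real n powr (1-3*\<epsilon>))"
    proof (rule sum_mono)
      fix P assume "P \<in> B3"
      then have "\<not> good_triple n \<epsilon> X L P" unfolding B3_def by blast
      then show "real (card (Gamma X L P)) \<le> real n powr (1-3*\<epsilon>)" unfolding good_triple_def by linarith
    qed
    also have "\<dots> = real (card B3) * real n powr (1-3*\<epsilon>)" by simp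
    also have "\<dots> \<le> real n ^ 3 * real n powr (1-3*\<epsilon>)" using cB3 by (simp add: mult_right_mono)
    finally show ?thesis using P5 by simp
  qed

  define d where "d x = real (card (N x))" for x
  define mu where "mu = C * Dr / 2"
  define \<Psi> where "\<Psi> x = d x ^ 2 * min (d x) (2*mu) - C^2/100 * Dr * real (b2 x) - C/20 * real (b3 x) - Dr^3/64" for x
  have mupos: "mu > 0" unfolding mu_def using Cpos Dpos by simp
  have sumd: "(\<Sum>x\<in>X. d x) = mu * real n"
  proof -
    have "(\<Sum>x\<in>X. d x) = real (card L)" unfolding d_def using sum_d by (metis of_nat_sum)
    also have "\<dots> = mu * real n" using cL P2 unfolding mu_def by (simp add: algebra_simps)
    finally show ?thesis .
  qed
  have sumf: "(\<Sum>x\<in>X. d x ^ 2 * min (d x) (2*mu)) \<ge> mu^3 * real n"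
  proof -
    have "(\<Sum>x\<in>X. d x ^ 2 * min (d x) (2*mu)) \<ge> (\<Sum>x\<in>X. 3*mu^2*d x - 2*mu^3)"
      by (rule sum_mono) (rule tangent3, auto simp: d_def mupos less_imp_le)
    moreover have "(\<Sum>x\<in>X. 3*mu^2*d x - 2*mu^3) = 3*mu^2*(\<Sum>x\<in>X. d x) - 2*mu^3*real n"
      by (simp add: sum_subtractf sum_distrib_left cX)
    ultimately show ?thesis unfolding sumd by (simp add: power2_eq_square power3_eq_cube)
  qed
  have sb2: "(\<Sum>x\<in>X. real (b2 x)) \<le> (1 + C) * real n * Dr^2"
    using S2 sum_b2 by (metis of_nat_sum)
  have sb3: "(\<Sum>x\<in>X. real (b3 x)) \<le> real n * Dr^3"
    using S3 sum_b3 by (metis of_nat_sum)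
  have npos: "real n > 0" using n1 by simp
  define p where "p = real n * Dr^3"
  have ppos: "p > 0" unfolding p_def using npos Dpos by simp
  have sumPsi: "(\<Sum>x\<in>X. \<Psi> x) > 0"
  proof -
    have "(\<Sum>x\<in>X. \<Psi> x) = (\<Sum>x\<in>X. d x ^ 2 * min (d x) (2*mu)) - C^2/100 * Dr * (\<Sum>x\<in>X. real (b2 x))
          - C/20 * (\<Sum>x\<in>X. real (b3 x)) - real n * Dr^3/64"
      unfolding \<Psi>_def by (simp add: sum_subtractf sum_distrib_left cX)
    also have "\<dots> \<ge> mu^3 * real n - C^2/100 * Dr * ((1 + C) * real n * Dr^2) - C/20 * (real n * Dr^3) - real n * Dr^3/64"
    proof -
      have "C^2/100 * Dr * (\<Sum>x\<in>X. real (b2 x)) \<le> C^2/100 * Dr * ((1 + C) * real n * Dr^2)"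
        using sb2 Dpos by (intro mult_left_mono) auto
      moreover have "C/20 * (\<Sum>x\<in>X. real (b3 x)) \<le> C/20 * (real n * Dr^3)"
        using sb3 Cpos by (intro mult_left_mono) auto
      ultimately show ?thesis using sumf by linarith
    qed
    also have "mu^3 * real n - C^2/100 * Dr * ((1 + C) * real n * Dr^2) - C/20 * (real n * Dr^3) - real n * Dr^3/64
        = p * (C^3/8 - C^2*(1+C)/100 - C/20 - 1/64)"
      unfolding p_def mu_def by (simp add: field_simps power2_eq_square power3_eq_cube)
    also have "\<dots> \<ge> p * (C^3/8 - C^3/50 - C/20 - 1/64)"
    proof -
      have "C^2 \<le> C^3" using C1 by (intro power_increasing) auto
      then have "C^2*(1+C)/100 \<le> C^3/50" by (simp add: algebra_simps power2_eq_square power3_eq_cube)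
      then show ?thesis using ppos by (intro mult_left_mono) auto
    qed
    finally have "(\<Sum>x\<in>X. \<Psi> x) \<ge> p * (C^3/8 - C^3/50 - C/20 - 1/64)" .
    moreover have "p * (C^3/8 - C^3/50 - C/20 - 1/64) > 0" by (rule mult_pos_pos[OF ppos constC[OF C1]])
    ultimately show ?thesis by linarith
  qed
  obtain x where xX: "x \<in> X" and Px: "\<Psi> x > 0"
  proof (rule ccontr)
    assume "\<not> thesis"
    then have "\<forall>x\<in>X. \<Psi> x \<le> 0" using that by force
    then have "(\<Sum>x\<in>X. \<Psi> x) \<le> 0" by (intro sum_nonpos) auto
    then show False using sumPsi by simp
  qed
  define dd where "dd = d x"
  define m where "m = min dd (2*mu)"
  have dd0: "dd \<ge> 0" unfolding dd_def d_def by simp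
  have mle: "m \<le> dd" "m \<le> C * Dr" unfolding m_def mu_def by auto
  have b20: "real (b2 x) \<ge> 0" and b30: "real (b3 x) \<ge> 0" by auto
  have key: "dd^2 * m > C^2/100 * Dr * real (b2 x) + C/20 * real (b3 x) + Dr^3/64"
    using Px unfolding \<Psi>_def dd_def m_def by linarith
  have t20: "C^2/100 * Dr * real (b2 x) \<ge> 0" using Cpos Dpos by simp
  have t30: "C/20 * real (b3 x) \<ge> 0" using Cpos by simp
  have D3: "Dr^3/64 > 0" using Dpos by simp
  have cube: "dd^2 * m \<le> dd^3"
    using mle(1) dd0 by (simp add: power2_eq_square power3_eq_cube mult_left_mono)
  have ddbig: "dd \<ge> Dr / 4"
  proof (rule ccontr)
    assume "\<not> dd \<ge> Dr / 4"
    then have "dd^3 \<le> (Dr/4)^3" using dd0 by (intro power_mono) auto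
    moreover have "(Dr/4)^3 = Dr^3/64" by (simp add: power_divide)
    ultimately show False using key cube t20 t30 by linarith
  qed
  have dd6: "dd \<ge> 6" using ddbig D24 by simp
  have setP: "{P. P \<subseteq> N x \<and> card P = 2 \<and> \<not> good_pair n \<epsilon> C K X Y Z G L P} = {P\<in>B2. P \<subseteq> N x}"
    using NY[of x] unfolding B2_def by blast
  have setT: "{T. T \<subseteq> N x \<and> card T = 3 \<and> \<not> good_triple n \<epsilon> X L T} = {P\<in>B3. P \<subseteq> N x}"
    using NY[of x] unfolding B3_def by blast
  have ch2: "(dd / 2)^2 \<le> real (card (N x) choose 2)"
  proof -
    have "2 \<le> card (N x)" using dd6 unfolding dd_def d_def by simp
    then show ?thesis using binomial_ge_n_over_k_pow_k[of 2 "card (N x)"] unfolding dd_def d_def by simp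
  qed
  have ch3: "(dd / 3)^3 \<le> real (card (N x) choose 3)"
  proof -
    have "3 \<le> card (N x)" using dd6 unfolding dd_def d_def by simp
    then show ?thesis using binomial_ge_n_over_k_pow_k[of 3 "card (N x)"] unfolding dd_def d_def by simp
  qed
  have bb2: "real (b2 x) \<le> (400 / C) * real (card (N x) choose 2)"
  proof -
    have "C^2/100 * Dr * real (b2 x) < dd^2 * m" using key t30 D3 by linarith
    also have "\<dots> \<le> dd^2 * (C * Dr)" using mle(2) by (intro mult_left_mono) auto
    finally have "(C * Dr / 100) * (C * real (b2 x)) < (C * Dr / 100) * (100 * dd^2)"
      by (simp add: algebra_simps power2_eq_square)
    then have "C * real (b2 x) < 100 * dd^2" using Cpos Dpos by (simp add: mult_less_cancel_left_pos)
    then have "real (b2 x) < 100 * dd^2 / C" using Cpos by (simp add: field_simps)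
    also have "100 * dd^2 / C = (400 / C) * (dd/2)^2" by (simp add: power2_eq_square)
    also have "\<dots> \<le> (400 / C) * real (card (N x) choose 2)" using ch2 Cpos by (intro mult_left_mono) auto
    finally show ?thesis by simp
  qed
  have bb3: "real (b3 x) \<le> (600 / C) * real (card (N x) choose 3)"
  proof -
    have "C/20 * real (b3 x) < dd^3" using key t20 cube D3 by linarith
    then have "real (b3 x) < 20 * dd^3 / C" using Cpos by (simp add: field_simps)
    also have "\<dots> \<le> (600 / C) * (dd/3)^3"
    proof -
      have "20 * dd^3 \<le> 600 * (dd/3)^3" using dd0 by (simp add: power3_eq_cube)
      then show ?thesis using Cpos by (simp add: divide_right_mono)
    qed
    also have "\<dots> \<le> (600 / C) * real (card (N x) choose 3)" using ch3 Cpos by (intro mult_left_mono) auto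
    finally show ?thesis by simp
  qed
  show ?thesis
  proof (intro exI conjI)
    show "N x \<subseteq> Y" by (rule NY)
    show "real (card (N x)) \<ge> real n powr (1 - \<epsilon>) / 4" using ddbig unfolding dd_def d_def Dr_def .
    show "real (card {P. P \<subseteq> N x \<and> card P = 2 \<and> \<not> good_pair n \<epsilon> C K X Y Z G L P})
                   \<le> (400 / C) * real (card (N x) choose 2)" unfolding setP using bb2 unfolding b2_def .
    show "real (card {T. T \<subseteq> N x \<and> card T = 3 \<and> \<not> good_triple n \<epsilon> X L T})
                   \<le> (600 / C) * real (card (N x) choose 3)" unfolding setT using bb3 unfolding b3_def .
  qed
qed
theorem lemma3p2:
  fixes VH :: "'b set" and EH :: "'b set set" and \<epsilon> C :: real
  assumes "three_graph VH EH" and "\<epsilon> \<le> 1/5" and "C \<ge> 1"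
  shows "\<exists>n0::nat. \<forall>n\<ge>n0. \<forall>(X::nat set) Y Z G (L :: (nat \<times> nat) set).
           tripartite_3graph X Y Z G \<and> card X = n \<and> card Y = n \<and> card Z = n \<and>
           L \<subseteq> X \<times> Y \<and> real (card L) = (C / 2) * real n powr (2 - \<epsilon>) \<and>
           real (card (forbidden_cycles_in (K_H VH) X Y Z G L))
             \<le> real (K_H VH) * real n powr (3 + 1/5 - \<epsilon>)
           \<longrightarrow> (\<exists>Y' \<subseteq> Y. real (card Y') \<ge> real n powr (1 - \<epsilon>) / 4 \<and>
                 real (card {P. P \<subseteq> Y' \<and> card P = 2 \<and>
                                \<not> good_pair n \<epsilon> C (K_H VH) X Y Z G L P})
                   \<le> (400 / C) * real (card Y' choose 2) \<and>
                 real (card {T. T \<subseteq> Y' \<and> card T = 3 \<and> \<not> good_triple n \<epsilon> X L T})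
                   \<le> (600 / C) * real (card Y' choose 3))"
proof -
  have big: "real n powr (4/5) \<ge> 24" if "n \<ge> 24^5" for n :: nat
  proof -
    have n24: "real n \<ge> 24^5" using that by (metis of_nat_le_iff of_nat_numeral of_nat_power)
    have "(24::real) = (24 ^ 5) powr (1/5)"
    proof -
      have "(24::real) ^ 5 = 24 powr (real 5)" by (simp add: powr_realpow)
      then have "((24::real) ^ 5) powr (1/5) = 24 powr (real 5 * (1/5))" by (simp add: powr_powr)
      then show ?thesis by simp
    qed
    also have "\<dots> \<le> real n powr (1/5)" by (rule powr_mono2) (use n24 in auto)
    also have "\<dots> \<le> real n powr (4/5)" by (rule powr_mono) (use n24 in auto)
    finally show ?thesis .
  qed
  show ?thesis
  proof (rule exI[of _ "24^5"], intro allI impI)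
    fix n :: nat and X Y Z :: "nat set" and G L
    assume n: "24^5 \<le> n"
    assume h: "tripartite_3graph X Y Z G \<and> card X = n \<and> card Y = n \<and> card Z = n \<and>
           L \<subseteq> X \<times> Y \<and> real (card L) = (C / 2) * real n powr (2 - \<epsilon>) \<and>
           real (card (forbidden_cycles_in (K_H VH) X Y Z G L))
             \<le> real (K_H VH) * real n powr (3 + 1/5 - \<epsilon>)"
    show "\<exists>Y' \<subseteq> Y. real (card Y') \<ge> real n powr (1 - \<epsilon>) / 4 \<and>
                 real (card {P. P \<subseteq> Y' \<and> card P = 2 \<and>
                                \<not> good_pair n \<epsilon> C (K_H VH) X Y Z G L P})
                   \<le> (400 / C) * real (card Y' choose 2) \<and>
                 real (card {T. T \<subseteq> Y' \<and> card T = 3 \<and> \<not> good_triple n \<epsilon> X L T})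
                   \<le> (600 / C) * real (card Y' choose 3)"
      using main[of X Y Z G n L C \<epsilon> "K_H VH"] h big[OF n] assms by blast
  qed
qed

end
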